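(* Let $r>1$ be a real number and let $p=T^3+rT^2+T+r$ over $\mathbb T$. Then a polynomial $q'$ over $\mathbb T$ satisfies $p\in(T+r)\boxdot q'$ if and only if $q'=T^2+sT+1$ for some $s\in[0,r^{-1}]$. In particular $T^2+T+1$ (whose coefficients are the elementary symmetric expressions $\max\{a_1,a_2\}$, $a_1a_2$ in the other roots $a_1=a_2=1$) is not such a quotient.
   Context: The tropical hyperfield $\mathbb T$ is $\mathbb R_{\ge0}$ with usual multiplication and hyperaddition $a\boxplus b=\{\max\{a,b\}\}$ if $a\ne b$, $a\boxplus a=[0,a]$ (so $c\in a\boxplus b$ iff the maximum of $a,b,c$ is attained at least twice). Polynomials over $\mathbb T$ are finitely supported sequences $\sum c_iT^i$; the hyperproduct is $p\boxdot q=\{\sum e_iT^i : e_i\in \boxplus_{k+l=i} c_kd_l\}$, with iterated sums $\boxplus_{i=1}^n a_i=\bigcup_{b\in\boxplus_{i=1}^{n-1}a_i} b\boxplus a_n$. *)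

theory Defs
  imports Complex_Main
begin

text \<open>Tropical hyperfield: elements are nonnegative reals.
  c \<in> a \<boxplus> b iff the maximum of a, b, c is attained at least twice.\<close>
definition thadd :: "real \<Rightarrow> real \<Rightarrow> real set" where
  "thadd a b = {c. c \<ge> 0 \<and>
     (let m = max a (max b c) in (a = m \<and> b = m) \<or> (a = m \<and> c = m) \<or> (b = m \<and> c = m))}"

text \<open>Iterated hypersum, left to right:
  hsum (xs @ [a]) = \<Union> b \<in> hsum xs. b \<boxplus> a, with empty sum {0}
  (so that a one-term sum is {a}).\<close>
fun thsum_rev :: "real list \<Rightarrow> real set" where
  "thsum_rev [] = {0}"
| "thsum_rev (a # xs) = (\<Union>b \<in> thsum_rev xs. thadd b a)"

definition thsum :: "real list \<Rightarrow> real set" where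
  "thsum xs = thsum_rev (rev xs)"

definition tpoly :: "(nat \<Rightarrow> real) \<Rightarrow> bool" where
  "tpoly f \<longleftrightarrow> (\<forall>i. f i \<ge> 0) \<and> finite {i. f i \<noteq> 0}"

definition tpmult :: "(nat \<Rightarrow> real) \<Rightarrow> (nat \<Rightarrow> real) \<Rightarrow> (nat \<Rightarrow> real) set" where
  "tpmult c d = {e. \<forall>i. e i \<in> thsum (map (\<lambda>k. c k * d (i - k)) [0..<Suc i])}"

text \<open>The polynomial with coefficient list [a0, a1, ...] (constant term first).\<close>
definition tcoeffs :: "real list \<Rightarrow> nat \<Rightarrow> real" where
  "tcoeffs xs i = (if i < length xs then xs ! i else 0)"

end

theory Submission
  imports Defs
begin

lemma thadd_zero: "b \<ge> 0 \<Longrightarrow> thadd b 0 = {b}"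
  by (auto simp: thadd_def Let_def max_def)

lemma thadd_zero_l: "b \<ge> 0 \<Longrightarrow> thadd 0 b = {b}"
  by (auto simp: thadd_def Let_def max_def)

lemma thsum_rev_nonneg: "x \<in> thsum_rev ys \<Longrightarrow> x \<ge> 0"
  by (induction ys arbitrary: x) (auto simp: thadd_def)

lemma thsum_rev_zeros: "thsum_rev (replicate n 0 @ ys) = thsum_rev ys"
proof (induction n)
  case 0 then show ?case by simp
next
  case (Suc n)
  have "thsum_rev (replicate (Suc n) 0 @ ys) = (\<Union>b\<in>thsum_rev ys. thadd b 0)"
    using Suc by simp
  also have "\<dots> = (\<Union>b\<in>thsum_rev ys. {b})"
  proof (rule SUP_cong)
    fix b assume "b \<in> thsum_rev ys"
    then show "thadd b 0 = {b}" using thsum_rev_nonneg thadd_zero by blast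
  qed simp
  finally show ?case by simp
qed

lemma map_eq:
  assumes "i \<ge> 1"
  shows "map (\<lambda>k. tcoeffs [r,1] k * q (i-k)) [0..<Suc i]
       = [r*q i, q(i-1)] @ replicate (i-1) 0"
proof -
  have u0: "[0..<Suc i] = [0..<2] @ [2..<Suc i]"
    using upt_add_eq_append[of 0 2 "i-1"] assms by simp
  have u1: "[0..<2::nat] = [0, 1]" by (simp add: numeral_2_eq_2)
  have u: "[0..<Suc i] = 0 # 1 # [2..<Suc i]" using u0 u1 by simp
  have "map (\<lambda>k. tcoeffs [r,1] k * q (i-k)) [2..<Suc i] = map (\<lambda>_. 0) [2..<Suc i]"
    by (rule map_cong) (auto simp: tcoeffs_def)
  also have "\<dots> = replicate (i-1) 0" using assms by (simp add: map_replicate_const; linarith)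
  finally show ?thesis using u by (simp add: tcoeffs_def)
qed

lemma thsum_i:
  assumes "r > 0" "\<forall>i. q i \<ge> 0"
  shows "thsum (map (\<lambda>k. tcoeffs [r,1] k * q (i-k)) [0..<Suc i])
     = (if i = 0 then {r * q 0} else thadd (r*q i) (q (i-1)))"
proof (cases "i = 0")
  case True
  have "r * q 0 \<ge> 0" using assms by simp
  then show ?thesis using True by (simp add: thsum_def tcoeffs_def thadd_zero_l)
next
  case False
  have "r * q i \<ge> 0" using assms by simp
  then show ?thesis using False map_eq[of i r q]
    by (simp add: thsum_def thsum_rev_zeros thadd_zero_l)
qed

lemma tmult_char:
  assumes "r > 0" "\<forall>i. q i \<ge> 0"
  shows "e \<in> tpmult (tcoeffs [r,1]) q \<longleftrightarrow>
     e 0 = r * q 0 \<and> (\<forall>i\<ge>1. e i \<in> thadd (r * q i) (q (i-1)))"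
proof -
  have "e \<in> tpmult (tcoeffs [r,1]) q \<longleftrightarrow>
     (\<forall>i. e i \<in> (if i = 0 then {r * q 0} else thadd (r*q i) (q (i-1))))"
    unfolding tpmult_def by (simp only: thsum_i[OF assms] mem_Collect_eq)
  also have "\<dots> \<longleftrightarrow> e 0 = r * q 0 \<and> (\<forall>i\<ge>1. e i \<in> thadd (r * q i) (q (i-1)))"
  proof
    assume h: "\<forall>i. e i \<in> (if i = 0 then {r * q 0} else thadd (r*q i) (q (i-1)))"
    show "e 0 = r * q 0 \<and> (\<forall>i\<ge>1. e i \<in> thadd (r * q i) (q (i-1)))"
    proof (intro conjI allI impI)
      show "e 0 = r * q 0" using h[rule_format, of 0] by simp
      fix i :: nat assume "i \<ge> 1"
      then show "e i \<in> thadd (r * q i) (q (i-1))" using h[rule_format, of i] by simp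
    qed
  next
    assume h: "e 0 = r * q 0 \<and> (\<forall>i\<ge>1. e i \<in> thadd (r * q i) (q (i-1)))"
    show "\<forall>i. e i \<in> (if i = 0 then {r * q 0} else thadd (r*q i) (q (i-1)))"
    proof
      fix i :: nat
      show "e i \<in> (if i = 0 then {r * q 0} else thadd (r*q i) (q (i-1)))"
        using h by (cases "i = 0") auto
    qed
  qed
  finally show ?thesis .
qed

theorem mainTheorem7:
  fixes r :: real
  assumes "r > 1"
  shows "(\<forall>q. tpoly q \<longrightarrow>
            (tcoeffs [r, 1, r, 1] \<in> tpmult (tcoeffs [r, 1]) q
             \<longleftrightarrow> (\<exists>s. 0 \<le> s \<and> s \<le> inverse r \<and> q = tcoeffs [1, s, 1])))
         \<and> tcoeffs [r, 1, r, 1] \<notin> tpmult (tcoeffs [r, 1]) (tcoeffs [1, 1, 1])"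
proof -
  have r0: "r > 0" using assms by simp
  have part1: "\<forall>q. tpoly q \<longrightarrow>
            (tcoeffs [r, 1, r, 1] \<in> tpmult (tcoeffs [r, 1]) q
             \<longleftrightarrow> (\<exists>s. 0 \<le> s \<and> s \<le> inverse r \<and> q = tcoeffs [1, s, 1]))"
  proof (intro allI impI)
    fix q assume tq: "tpoly q"
    hence qn: "\<forall>i. q i \<ge> 0" and fin: "finite {i. q i \<noteq> 0}" by (auto simp: tpoly_def)
    note char = tmult_char[OF r0 qn, of "tcoeffs [r,1,r,1]"]
    show "tcoeffs [r, 1, r, 1] \<in> tpmult (tcoeffs [r, 1]) q
             \<longleftrightarrow> (\<exists>s. 0 \<le> s \<and> s \<le> inverse r \<and> q = tcoeffs [1, s, 1])"
    proof
      assume "tcoeffs [r, 1, r, 1] \<in> tpmult (tcoeffs [r, 1]) q"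
      hence h0: "r = r * q 0" and hi: "\<forall>i\<ge>1. tcoeffs [r,1,r,1] i \<in> thadd (r * q i) (q (i-1))"
        using char by (auto simp: tcoeffs_def)
      have q0: "q 0 = 1" using h0 r0 by simp
      have "1 \<in> thadd (r * q 1) 1" using hi[rule_format, of 1] q0 by (simp add: tcoeffs_def)
      hence h1: "r * q 1 \<le> 1" using qn r0
        by (auto simp: thadd_def Let_def max_def split: if_splits)
      have q1: "q 1 < 1" using h1 assms qn
        by (smt (verit, best) mult_le_cancel_right1 mult.commute)
      have "r \<in> thadd (r * q 2) (q 1)" using hi[rule_format, of 2] by (simp add: tcoeffs_def)
      moreover have m2: "q 2 \<le> r * q 2" using qn assms mult_right_mono[of 1 r "q 2"] by simp
      ultimately have q2: "q 2 = 1" using qn r0 q1 assms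
        by (auto simp: thadd_def Let_def max_def split: if_splits; smt (verit) m2)
      have h4: "r * q i = q (i - 1)" if "i \<ge> 4" for i
      proof -
        have "0 \<in> thadd (r * q i) (q (i-1))" using hi[rule_format, of i] that
          by (simp add: tcoeffs_def)
        moreover have "r * q i \<ge> 0" "q (i-1) \<ge> 0" using qn r0 by auto
        ultimately show ?thesis
          by (auto simp: thadd_def Let_def max_def split: if_splits)
      qed
      have q3: "q 3 = 0"
      proof (rule ccontr)
        assume "q 3 \<noteq> 0"
        hence "q 3 > 0" using qn[rule_format, of 3] by linarith
        have pos: "q (3 + n) > 0" for n
        proof (induction n)
          case 0 then show ?case using \<open>q 3 > 0\<close> by simp
        next
          case (Suc n)
          have "r * q (3 + Suc n) = q (3 + n)" using h4[of "3 + Suc n"] by simp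
          then show ?case using Suc r0 qn
            by (metis mult_eq_0_iff order_le_less)
        qed
        have "{3..} \<subseteq> {i. q i \<noteq> 0}"
        proof
          fix i :: nat assume "i \<in> {3..}"
          then have "i = 3 + (i - 3)" by simp
          then show "i \<in> {i. q i \<noteq> 0}" using pos[of "i-3"] by (metis less_irrefl mem_Collect_eq)
        qed
        hence "finite {3::nat..}" using fin finite_subset by blast
        thus False using infinite_Ici[of "3::nat"] by simp
      qed
      have z: "q (3 + n) = 0" for n
      proof (induction n)
        case 0 then show ?case using q3 by simp
      next
        case (Suc n)
        have "r * q (3 + Suc n) = q (3 + n)" using h4[of "3 + Suc n"] by simp
        then show ?case using Suc r0 by simp
      qed
      have "q = tcoeffs [1, q 1, 1]"
      proof
        fix i
        show "q i = tcoeffs [1, q 1, 1] i"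
        proof (cases "i < 3")
          case True
          then have "i = 0 \<or> i = 1 \<or> i = 2" by auto
          then show ?thesis using q0 q2 by (auto simp: tcoeffs_def)
        next
          case False
          then have "i = 3 + (i - 3)" by simp
          then show ?thesis using z[of "i-3"] False by (simp add: tcoeffs_def)
        qed
      qed
      moreover have "q 1 \<le> inverse r" using h1 r0
        by (simp add: field_simps)
      ultimately show "\<exists>s. 0 \<le> s \<and> s \<le> inverse r \<and> q = tcoeffs [1, s, 1]"
        using qn by blast
    next
      assume "\<exists>s. 0 \<le> s \<and> s \<le> inverse r \<and> q = tcoeffs [1, s, 1]"
      then obtain s where s0: "0 \<le> s" and sr: "s \<le> inverse r" and qd: "q = tcoeffs [1, s, 1]"
        by blast
      have rs: "r * s \<le> 1" using sr r0 by (simp add: field_simps)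
      have sl: "s < r" using rs assms s0
        by (smt (verit, best) mult_le_cancel_right1 mult.commute)
      have "tcoeffs [r,1,r,1] i \<in> thadd (r * q i) (q (i-1))" if "i \<ge> 1" for i
      proof -
        have "i = 1 \<or> i = 2 \<or> i = 3 \<or> i \<ge> 4" using that by linarith
        then consider "i = 1" | "i = 2" | "i = 3" | "i \<ge> 4" by blast
        then show ?thesis
        proof cases
          case 1 then show ?thesis using qd rs s0 r0
            by (auto simp: tcoeffs_def thadd_def Let_def max_def)
        next
          case 2 then show ?thesis using qd sl s0 r0
            by (auto simp: tcoeffs_def thadd_def Let_def max_def)
        next
          case 3 then show ?thesis using qd r0 assms
            by (auto simp: tcoeffs_def thadd_def Let_def max_def)
        next
          case 4 then show ?thesis using qd
            by (auto simp: tcoeffs_def thadd_def Let_def max_def)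
        qed
      qed
      moreover have "tcoeffs [r,1,r,1] 0 = r * q 0" using qd by (simp add: tcoeffs_def)
      ultimately show "tcoeffs [r, 1, r, 1] \<in> tpmult (tcoeffs [r, 1]) q"
        using char by blast
    qed
  qed
  have tp: "tpoly (tcoeffs [1, 1, 1])"
  proof -
    have "{i. tcoeffs [1::real, 1, 1] i \<noteq> 0} \<subseteq> {..<3}" by (auto simp: tcoeffs_def split: if_splits)
    hence "finite {i. tcoeffs [1::real, 1, 1] i \<noteq> 0}" using finite_subset by blast
    moreover have "\<forall>i. tcoeffs [1::real, 1, 1] i \<ge> 0"
      by (auto simp: tcoeffs_def nth_Cons split: nat.splits)
    ultimately show ?thesis by (simp add: tpoly_def)
  qed
  have part2: "tcoeffs [r, 1, r, 1] \<notin> tpmult (tcoeffs [r, 1]) (tcoeffs [1, 1, 1])"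
  proof
    assume "tcoeffs [r, 1, r, 1] \<in> tpmult (tcoeffs [r, 1]) (tcoeffs [1, 1, 1])"
    then obtain s where "s \<le> inverse r" "tcoeffs [1, 1, 1] = tcoeffs [1::real, s, 1]"
      using part1 tp by blast
    moreover have "inverse r < 1" using assms by (simp add: inverse_less_1_iff)
    moreover have "tcoeffs [1, 1, 1] 1 = (1::real)" "tcoeffs [1::real, s, 1] 1 = s"
      by (auto simp: tcoeffs_def)
    ultimately show False by (metis not_less)
  qed
  show ?thesis using part1 part2 by blast
qed

end
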